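(* Let $k$ be a field of characteristic $\neq 2$, and let $W=A\wr T$ be the wreath product of the abelian Lie algebras $A$ (basis $a_1,\dots,a_m$) and $T$ (basis $t_1,\dots,t_n$). Then $W$ has the presentation with generators $a_1,\dots,a_m,t_1,\dots,t_n$ and relations $[t_i,t_j]=0$ for $1\le i,j\le n$, and $[[a_k,t_{i_1},\dots,t_{i_r}],[a_l,t_{j_1},\dots,t_{j_s}]]=0$ for all $1\le k,l\le m$, all $r\ge 0$, $s\ge 0$ and all $i_1,\dots,i_r,j_1,\dots,j_s\in\{1,\dots,n\}$.
   Context: Left-normed brackets: $[y_1,\dots,y_n]=[[y_1,\dots,y_{n-1}],y_n]$ for $n>2$. Construction of $A\wr T$: $A$ and $T$ are finite-dimensional abelian Lie algebras over $k$ with bases $\{a_1,\dots,a_m\}$ and $\{t_1,\dots,t_n\}$. Let $U=U(T)=k[t_1,\dots,t_n]$ (the universal enveloping algebra of $T$) and let $B$ be the free right $U$-module with basis $\{a_1,\dots,a_m\}$; $B$ is a right Lie module over $T$ via the action of $T\subset U$. The wreath product is $W=A\wr T=B\oplus T$ (as vector spaces) with bracket $[b_1+s_1,b_2+s_2]=(b_1s_2-b_2s_1)+[s_1,s_2]$ for $b_i\in B$, $s_i\in T$, where $[s_1,s_2]=0$ as $T$ is abelian. Thus $[a_k,t_{i_1},\dots,t_{i_r}]$ corresponds to $a_k t_{i_1}\cdots t_{i_r}\in B$. *)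

theory Defs
  imports Main
begin

record ('k, 'a) lie_alg =
  car  :: "'a set"
  add  :: "'a \<Rightarrow> 'a \<Rightarrow> 'a"
  zer  :: "'a"
  neg  :: "'a \<Rightarrow> 'a"
  smul :: "'k \<Rightarrow> 'a \<Rightarrow> 'a"
  br   :: "'a \<Rightarrow> 'a \<Rightarrow> 'a"

definition lie_algebra :: "('k::field, 'a) lie_alg \<Rightarrow> bool" where
  "lie_algebra L \<longleftrightarrow>
     zer L \<in> car L \<and>
     (\<forall>x\<in>car L. \<forall>y\<in>car L. add L x y \<in> car L) \<and>
     (\<forall>x\<in>car L. neg L x \<in> car L) \<and>
     (\<forall>c. \<forall>x\<in>car L. smul L c x \<in> car L) \<and>
     (\<forall>x\<in>car L. \<forall>y\<in>car L. br L x y \<in> car L) \<and>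
     (\<forall>x\<in>car L. \<forall>y\<in>car L. \<forall>z\<in>car L. add L (add L x y) z = add L x (add L y z)) \<and>
     (\<forall>x\<in>car L. \<forall>y\<in>car L. add L x y = add L y x) \<and>
     (\<forall>x\<in>car L. add L (zer L) x = x) \<and>
     (\<forall>x\<in>car L. add L (neg L x) x = zer L) \<and>
     (\<forall>c d. \<forall>x\<in>car L. smul L c (smul L d x) = smul L (c * d) x) \<and>
     (\<forall>x\<in>car L. smul L 1 x = x) \<and>
     (\<forall>c. \<forall>x\<in>car L. \<forall>y\<in>car L. smul L c (add L x y) = add L (smul L c x) (smul L c y)) \<and>
     (\<forall>c d. \<forall>x\<in>car L. smul L (c + d) x = add L (smul L c x) (smul L d x)) \<and>
     (\<forall>x\<in>car L. \<forall>y\<in>car L. \<forall>z\<in>car L. br L (add L x y) z = add L (br L x z) (br L y z)) \<and>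
     (\<forall>x\<in>car L. \<forall>y\<in>car L. \<forall>z\<in>car L. br L x (add L y z) = add L (br L x y) (br L x z)) \<and>
     (\<forall>c. \<forall>x\<in>car L. \<forall>y\<in>car L. br L (smul L c x) y = smul L c (br L x y)) \<and>
     (\<forall>c. \<forall>x\<in>car L. \<forall>y\<in>car L. br L x (smul L c y) = smul L c (br L x y)) \<and>
     (\<forall>x\<in>car L. br L x x = zer L) \<and>
     (\<forall>x\<in>car L. \<forall>y\<in>car L. \<forall>z\<in>car L.
        add L (add L (br L x (br L y z)) (br L y (br L z x))) (br L z (br L x y)) = zer L)"

definition lie_hom :: "('k::field, 'a) lie_alg \<Rightarrow> ('k, 'b) lie_alg \<Rightarrow> ('a \<Rightarrow> 'b) \<Rightarrow> bool" where
  "lie_hom L M f \<longleftrightarrow>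
     (\<forall>x\<in>car L. f x \<in> car M) \<and>
     (\<forall>x\<in>car L. \<forall>y\<in>car L. f (add L x y) = add M (f x) (f y)) \<and>
     (\<forall>c. \<forall>x\<in>car L. f (smul L c x) = smul M c (f x)) \<and>
     (\<forall>x\<in>car L. \<forall>y\<in>car L. f (br L x y) = br M (f x) (f y))"

definition lie_subalgebra :: "('k::field, 'a) lie_alg \<Rightarrow> 'a set \<Rightarrow> bool" where
  "lie_subalgebra L S \<longleftrightarrow> S \<subseteq> car L \<and> zer L \<in> S \<and>
     (\<forall>x\<in>S. \<forall>y\<in>S. add L x y \<in> S) \<and> (\<forall>x\<in>S. neg L x \<in> S) \<and>
     (\<forall>c. \<forall>x\<in>S. smul L c x \<in> S) \<and> (\<forall>x\<in>S. \<forall>y\<in>S. br L x y \<in> S)"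

definition lie_generates :: "('k::field, 'a) lie_alg \<Rightarrow> 'a set \<Rightarrow> bool" where
  "lie_generates L G \<longleftrightarrow> G \<subseteq> car L \<and>
     (\<forall>S. lie_subalgebra L S \<and> G \<subseteq> S \<longrightarrow> car L \<subseteq> S)"

definition lnbr :: "('k, 'a) lie_alg \<Rightarrow> 'a \<Rightarrow> 'a list \<Rightarrow> 'a" where
  "lnbr L x ys = foldl (br L) x ys"

definition wreath_relations ::
  "('k::field, 'a) lie_alg \<Rightarrow> nat \<Rightarrow> nat \<Rightarrow> (nat \<Rightarrow> 'a) \<Rightarrow> (nat \<Rightarrow> 'a) \<Rightarrow> bool" where
  "wreath_relations L m n a t \<longleftrightarrow>
     (\<forall>k<m. a k \<in> car L) \<and> (\<forall>i<n. t i \<in> car L) \<and>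
     (\<forall>i<n. \<forall>j<n. br L (t i) (t j) = zer L) \<and>
     (\<forall>k<m. \<forall>l<m. \<forall>is js. set is \<subseteq> {..<n} \<and> set js \<subseteq> {..<n} \<longrightarrow>
        br L (lnbr L (a k) (map t is)) (lnbr L (a l) (map t js)) = zer L)"

text \<open>Concrete model of the wreath product W = A wr T = B + T.
  An element is a pair (b, s): b k alpha is the coefficient of a_k t^alpha in B
  (k < m, alpha an exponent vector supported on {..<n}, finitely many nonzero),
  s i is the coefficient of t_i in T (i < n).  Indices are 0-based.\<close>

type_synonym 'k wr_elem = "(nat \<Rightarrow> (nat \<Rightarrow> nat) \<Rightarrow> 'k) \<times> (nat \<Rightarrow> 'k)"

definition wr_carrier :: "nat \<Rightarrow> nat \<Rightarrow> ('k::field) wr_elem set" where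
  "wr_carrier m n = {(b, s).
     finite {(k, \<alpha>). b k \<alpha> \<noteq> 0} \<and>
     (\<forall>k \<alpha>. b k \<alpha> \<noteq> 0 \<longrightarrow> k < m \<and> (\<forall>j\<ge>n. \<alpha> j = 0)) \<and>
     (\<forall>i. s i \<noteq> 0 \<longrightarrow> i < n)}"

text \<open>Right action of s = sum s_i t_i on B: (b s)(k, alpha) = sum_i s_i b(k, alpha - e_i).\<close>
definition wr_act :: "nat \<Rightarrow> (nat \<Rightarrow> (nat \<Rightarrow> nat) \<Rightarrow> 'k::field) \<Rightarrow> (nat \<Rightarrow> 'k)
                      \<Rightarrow> (nat \<Rightarrow> (nat \<Rightarrow> nat) \<Rightarrow> 'k)" where
  "wr_act n b s = (\<lambda>k \<alpha>. \<Sum>i<n. if 0 < \<alpha> i then s i * b k (\<alpha>(i := \<alpha> i - 1)) else 0)"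

definition wreath :: "nat \<Rightarrow> nat \<Rightarrow> ('k::field, 'k wr_elem) lie_alg" where
  "wreath m n = \<lparr> car = wr_carrier m n,
     add = (\<lambda>(b1, s1) (b2, s2). (\<lambda>k \<alpha>. b1 k \<alpha> + b2 k \<alpha>, \<lambda>i. s1 i + s2 i)),
     zer = (\<lambda>k \<alpha>. 0, \<lambda>i. 0),
     neg = (\<lambda>(b, s). (\<lambda>k \<alpha>. - b k \<alpha>, \<lambda>i. - s i)),
     smul = (\<lambda>c (b, s). (\<lambda>k \<alpha>. c * b k \<alpha>, \<lambda>i. c * s i)),
     br = (\<lambda>(b1, s1) (b2, s2).
            (\<lambda>k \<alpha>. wr_act n b1 s2 k \<alpha> - wr_act n b2 s1 k \<alpha>, \<lambda>i. 0)) \<rparr>"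

definition wr_a :: "nat \<Rightarrow> ('k::field) wr_elem" where
  "wr_a k = (\<lambda>k' \<alpha>. if k' = k \<and> \<alpha> = (\<lambda>_. 0) then 1 else 0, \<lambda>i. 0)"

definition wr_t :: "nat \<Rightarrow> ('k::field) wr_elem" where
  "wr_t i = (\<lambda>k \<alpha>. 0, \<lambda>j. if j = i then 1 else 0)"

end

theory Submission
  imports Defs "HOL-Algebra.FiniteProduct"
begin

definition MM :: "('k, 'b) lie_alg \<Rightarrow> 'b monoid" where
  "MM L = \<lparr>carrier = car L, mult = add L, one = zer L\<rparr>"

locale LA = fixes L :: "('k::field, 'b) lie_alg" assumes LA: "lie_algebra L"
begin

lemmas zer_c0 = LA[unfolded lie_algebra_def, THEN conjunct1]
lemmas add_c0 = LA[unfolded lie_algebra_def, THEN conjunct2, THEN conjunct1]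
lemmas neg_c0 = LA[unfolded lie_algebra_def, THEN conjunct2, THEN conjunct2, THEN conjunct1]
lemmas smul_c0 = LA[unfolded lie_algebra_def, THEN conjunct2, THEN conjunct2, THEN conjunct2, THEN conjunct1]
lemmas br_c0 = LA[unfolded lie_algebra_def, THEN conjunct2, THEN conjunct2, THEN conjunct2, THEN conjunct2, THEN conjunct1]
lemmas assoc0 = LA[unfolded lie_algebra_def, THEN conjunct2, THEN conjunct2, THEN conjunct2, THEN conjunct2, THEN conjunct2, THEN conjunct1]
lemmas comm0 = LA[unfolded lie_algebra_def, THEN conjunct2, THEN conjunct2, THEN conjunct2, THEN conjunct2, THEN conjunct2, THEN conjunct2, THEN conjunct1]
lemmas zl0 = LA[unfolded lie_algebra_def, THEN conjunct2, THEN conjunct2, THEN conjunct2, THEN conjunct2, THEN conjunct2, THEN conjunct2, THEN conjunct2, THEN conjunct1]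
lemmas negl0 = LA[unfolded lie_algebra_def, THEN conjunct2, THEN conjunct2, THEN conjunct2, THEN conjunct2, THEN conjunct2, THEN conjunct2, THEN conjunct2, THEN conjunct2, THEN conjunct1]
lemmas smsm0 = LA[unfolded lie_algebra_def, THEN conjunct2, THEN conjunct2, THEN conjunct2, THEN conjunct2, THEN conjunct2, THEN conjunct2, THEN conjunct2, THEN conjunct2, THEN conjunct2, THEN conjunct1]
lemmas sm10 = LA[unfolded lie_algebra_def, THEN conjunct2, THEN conjunct2, THEN conjunct2, THEN conjunct2, THEN conjunct2, THEN conjunct2, THEN conjunct2, THEN conjunct2, THEN conjunct2, THEN conjunct2, THEN conjunct1]
lemmas smadd0 = LA[unfolded lie_algebra_def, THEN conjunct2, THEN conjunct2, THEN conjunct2, THEN conjunct2, THEN conjunct2, THEN conjunct2, THEN conjunct2, THEN conjunct2, THEN conjunct2, THEN conjunct2, THEN conjunct2, THEN conjunct1]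
lemmas addsm0 = LA[unfolded lie_algebra_def, THEN conjunct2, THEN conjunct2, THEN conjunct2, THEN conjunct2, THEN conjunct2, THEN conjunct2, THEN conjunct2, THEN conjunct2, THEN conjunct2, THEN conjunct2, THEN conjunct2, THEN conjunct2, THEN conjunct1]
lemmas bral0 = LA[unfolded lie_algebra_def, THEN conjunct2, THEN conjunct2, THEN conjunct2, THEN conjunct2, THEN conjunct2, THEN conjunct2, THEN conjunct2, THEN conjunct2, THEN conjunct2, THEN conjunct2, THEN conjunct2, THEN conjunct2, THEN conjunct2, THEN conjunct1]
lemmas brar0 = LA[unfolded lie_algebra_def, THEN conjunct2, THEN conjunct2, THEN conjunct2, THEN conjunct2, THEN conjunct2, THEN conjunct2, THEN conjunct2, THEN conjunct2, THEN conjunct2, THEN conjunct2, THEN conjunct2, THEN conjunct2, THEN conjunct2, THEN conjunct2, THEN conjunct1]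
lemmas brsl0 = LA[unfolded lie_algebra_def, THEN conjunct2, THEN conjunct2, THEN conjunct2, THEN conjunct2, THEN conjunct2, THEN conjunct2, THEN conjunct2, THEN conjunct2, THEN conjunct2, THEN conjunct2, THEN conjunct2, THEN conjunct2, THEN conjunct2, THEN conjunct2, THEN conjunct2, THEN conjunct1]
lemmas brsr0 = LA[unfolded lie_algebra_def, THEN conjunct2, THEN conjunct2, THEN conjunct2, THEN conjunct2, THEN conjunct2, THEN conjunct2, THEN conjunct2, THEN conjunct2, THEN conjunct2, THEN conjunct2, THEN conjunct2, THEN conjunct2, THEN conjunct2, THEN conjunct2, THEN conjunct2, THEN conjunct2, THEN conjunct1]
lemmas brself0 = LA[unfolded lie_algebra_def, THEN conjunct2, THEN conjunct2, THEN conjunct2, THEN conjunct2, THEN conjunct2, THEN conjunct2, THEN conjunct2, THEN conjunct2, THEN conjunct2, THEN conjunct2, THEN conjunct2, THEN conjunct2, THEN conjunct2, THEN conjunct2, THEN conjunct2, THEN conjunct2, THEN conjunct2, THEN conjunct1]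
lemmas jac0 = LA[unfolded lie_algebra_def, THEN conjunct2, THEN conjunct2, THEN conjunct2, THEN conjunct2, THEN conjunct2, THEN conjunct2, THEN conjunct2, THEN conjunct2, THEN conjunct2, THEN conjunct2, THEN conjunct2, THEN conjunct2, THEN conjunct2, THEN conjunct2, THEN conjunct2, THEN conjunct2, THEN conjunct2, THEN conjunct2]

lemma zer_c[simp]: "zer L \<in> car L" using zer_c0 by blast
lemma add_c[simp]: "x \<in> car L \<Longrightarrow> y \<in> car L \<Longrightarrow> add L x y \<in> car L" using add_c0 by blast
lemma neg_c[simp]: "x \<in> car L \<Longrightarrow> neg L x \<in> car L" using neg_c0 by blast
lemma smul_c[simp]: "x \<in> car L \<Longrightarrow> smul L c x \<in> car L" using smul_c0 by blast
lemma br_c[simp]: "x \<in> car L \<Longrightarrow> y \<in> car L \<Longrightarrow> br L x y \<in> car L" using br_c0 by blast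
lemma add_assoc: "x \<in> car L \<Longrightarrow> y \<in> car L \<Longrightarrow> z \<in> car L \<Longrightarrow> add L (add L x y) z = add L x (add L y z)"
  using assoc0 by blast
lemma add_comm: "x \<in> car L \<Longrightarrow> y \<in> car L \<Longrightarrow> add L x y = add L y x"
  using comm0 by blast
lemma add_zl[simp]: "x \<in> car L \<Longrightarrow> add L (zer L) x = x" using zl0 by blast
lemma add_zr[simp]: "x \<in> car L \<Longrightarrow> add L x (zer L) = x" using add_comm add_zl by simp
lemma add_negl: "x \<in> car L \<Longrightarrow> add L (neg L x) x = zer L" using negl0 by blast
lemma smul_smul: "x \<in> car L \<Longrightarrow> smul L c (smul L d x) = smul L (c*d) x" using smsm0 by blast
lemma smul_one[simp]: "x \<in> car L \<Longrightarrow> smul L 1 x = x" using sm10 by blast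
lemma smul_add: "x \<in> car L \<Longrightarrow> y \<in> car L \<Longrightarrow> smul L c (add L x y) = add L (smul L c x) (smul L c y)"
  using smadd0 by blast
lemma add_smul: "x \<in> car L \<Longrightarrow> smul L (c+d) x = add L (smul L c x) (smul L d x)"
  using addsm0 by blast
lemma br_addl: "x \<in> car L \<Longrightarrow> y \<in> car L \<Longrightarrow> z \<in> car L \<Longrightarrow> br L (add L x y) z = add L (br L x z) (br L y z)"
  using bral0 by blast
lemma br_addr: "x \<in> car L \<Longrightarrow> y \<in> car L \<Longrightarrow> z \<in> car L \<Longrightarrow> br L x (add L y z) = add L (br L x y) (br L x z)"
  using brar0 by blast
lemma br_smull: "x \<in> car L \<Longrightarrow> y \<in> car L \<Longrightarrow> br L (smul L c x) y = smul L c (br L x y)"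
  using brsl0 by blast
lemma br_smulr: "x \<in> car L \<Longrightarrow> y \<in> car L \<Longrightarrow> br L x (smul L c y) = smul L c (br L x y)"
  using brsr0 by blast
lemma br_self: "x \<in> car L \<Longrightarrow> br L x x = zer L" using brself0 by blast
lemma jacobi: "x \<in> car L \<Longrightarrow> y \<in> car L \<Longrightarrow> z \<in> car L \<Longrightarrow>
        add L (add L (br L x (br L y z)) (br L y (br L z x))) (br L z (br L x y)) = zer L"
  using jac0 by blast

lemma add_cancel: assumes "x \<in> car L" "y \<in> car L" "z \<in> car L" "add L x y = add L x z" shows "y = z"
proof -
  have "add L (neg L x) (add L x y) = add L (neg L x) (add L x z)" using assms by simp
  hence "add L (add L (neg L x) x) y = add L (add L (neg L x) x) z" using assms by (simp add: add_assoc)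
  thus ?thesis using assms by (simp add: add_negl)
qed

lemma smul_zero[simp]: assumes "x \<in> car L" shows "smul L 0 x = zer L"
proof -
  have "add L (smul L 0 x) (smul L 0 x) = add L (smul L 0 x) (zer L)"
    using add_smul[OF assms, of 0 0] assms by simp
  thus ?thesis using add_cancel assms by (metis smul_c zer_c)
qed

lemma smul_zer[simp]: "smul L c (zer L) = zer L"
  using smul_smul[of "zer L" c 0] by simp

lemma br_zl[simp]: "y \<in> car L \<Longrightarrow> br L (zer L) y = zer L"
  using br_smull[of "zer L" y 0] by simp
lemma br_zr[simp]: "y \<in> car L \<Longrightarrow> br L y (zer L) = zer L"
  using br_smulr[of y "zer L" 0] by simp

lemma br_anti: assumes "x \<in> car L" "y \<in> car L" shows "br L y x = smul L (-1) (br L x y)"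
proof -
  have "br L (add L x y) (add L x y) = add L (add L (br L x x) (br L y x)) (add L (br L x y) (br L y y))" using assms
    by (simp add: br_addl br_addr)
  also have "\<dots> = add L (br L y x) (br L x y)" using assms by (simp add: br_self)
  also have "\<dots> = add L (br L x y) (br L y x)" using assms by (simp add: add_comm)
  finally have "br L (add L x y) (add L x y) = add L (br L x y) (br L y x)" .
  moreover have "br L (add L x y) (add L x y) = zer L" using assms by (simp add: br_self)
  ultimately have "add L (br L x y) (br L y x) = zer L" by simp
  moreover have "add L (br L x y) (smul L (-1) (br L x y)) = zer L"
    using add_smul[of "br L x y" 1 "-1"] assms by simp
  ultimately show ?thesis using add_cancel assms by (metis br_c smul_c)
qed

lemma swap_t: assumes u: "u \<in> car L" and x: "x \<in> car L" and y: "y \<in> car L" and xy: "br L x y = zer L"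
  shows "br L (br L u x) y = br L (br L u y) x"
proof -
  have j: "add L (add L (br L u (br L x y)) (br L x (br L y u))) (br L y (br L u x)) = zer L"
    using jacobi u x y by blast
  have e1: "br L x (br L y u) = br L (br L u y) x"
  proof -
    have "br L y u = smul L (-1) (br L u y)" by (rule br_anti[OF u y])
    hence "br L x (br L y u) = smul L (-1) (br L x (br L u y))" using br_smulr u x y by simp
    also have "br L x (br L u y) = smul L (-1) (br L (br L u y) x)" using br_anti[of "br L u y" x] u x y by simp
    finally show ?thesis using u x y by (simp add: smul_smul)
  qed
  have e2: "br L y (br L u x) = smul L (-1) (br L (br L u x) y)" using br_anti[of "br L u x" y] u x y by simp
  have "add L (br L (br L u y) x) (smul L (-1) (br L (br L u x) y)) = zer L"
    using j e1 e2 xy u x y by simp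
  moreover have "add L (br L (br L u y) x) (smul L (-1) (br L (br L u y) x)) = zer L"
    using add_smul[of "br L (br L u y) x" 1 "-1"] u x y by simp
  ultimately have "smul L (-1) (br L (br L u x) y) = smul L (-1) (br L (br L u y) x)"
    using add_cancel u x y by (metis br_c smul_c)
  hence "smul L (-1) (smul L (-1) (br L (br L u x) y)) = smul L (-1) (smul L (-1) (br L (br L u y) x))" by simp
  thus ?thesis using u x y by (simp add: smul_smul)
qed

lemma cm: "comm_monoid (MM L)"
  apply (unfold_locales)
  apply (auto simp: MM_def add_assoc)
  by (metis add_assoc add_comm add_c)

end

context LA begin

interpretation M: comm_monoid "MM L" by (rule cm)

lemma MM_simps[simp]: "carrier (MM L) = car L" "mult (MM L) = add L" "one (MM L) = zer L"
  by (simp_all add: MM_def)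

definition lsum :: "('x \<Rightarrow> 'b) \<Rightarrow> 'x set \<Rightarrow> 'b" where
  "lsum g A = finprod (MM L) g A"

lemma lsum_closed[simp]: "(\<And>x. x \<in> A \<Longrightarrow> g x \<in> car L) \<Longrightarrow> lsum g A \<in> car L"
  unfolding lsum_def using M.finprod_closed[of g A] by (auto simp: Pi_def)

lemma lsum_empty[simp]: "lsum g {} = zer L"
  unfolding lsum_def by simp

lemma lsum_infinite: "\<not> finite A \<Longrightarrow> lsum g A = zer L"
  unfolding lsum_def by simp

lemma lsum_insert: "finite A \<Longrightarrow> a \<notin> A \<Longrightarrow> (\<And>x. x \<in> insert a A \<Longrightarrow> g x \<in> car L) \<Longrightarrow>
   lsum g (insert a A) = add L (g a) (lsum g A)"
  unfolding lsum_def using M.finprod_insert[of A a g] by (auto simp: Pi_def)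

lemma lsum_add: "(\<And>x. x \<in> A \<Longrightarrow> f x \<in> car L) \<Longrightarrow> (\<And>x. x \<in> A \<Longrightarrow> g x \<in> car L) \<Longrightarrow>
   lsum (\<lambda>x. add L (f x) (g x)) A = add L (lsum f A) (lsum g A)"
  unfolding lsum_def using M.finprod_multf[of f A g] by (auto simp: Pi_def)

lemma lsum_zero: "(\<And>x. x \<in> A \<Longrightarrow> g x = zer L) \<Longrightarrow> lsum g A = zer L"
  unfolding lsum_def using M.finprod_one_eqI[of A g] by simp

lemma lsum_cong: "A = B \<Longrightarrow> (\<And>x. x \<in> B \<Longrightarrow> g x \<in> car L) \<Longrightarrow> (\<And>x. x \<in> B \<Longrightarrow> f x = g x) \<Longrightarrow>
   lsum f A = lsum g B"
  unfolding lsum_def using M.finprod_cong'[of A B g f] by (auto simp: Pi_def)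

lemma lsum_reindex: "(\<And>x. x \<in> h ` A \<Longrightarrow> g x \<in> car L) \<Longrightarrow> inj_on h A \<Longrightarrow>
   lsum g (h ` A) = lsum (\<lambda>x. g (h x)) A"
  unfolding lsum_def using M.finprod_reindex[of g h A] by (auto simp: Pi_def)

lemma lsum_mono_neutral: "finite B \<Longrightarrow> A \<subseteq> B \<Longrightarrow> (\<And>x. x \<in> B - A \<Longrightarrow> g x = zer L) \<Longrightarrow>
   (\<And>x. x \<in> B \<Longrightarrow> g x \<in> car L) \<Longrightarrow> lsum g A = lsum g B"
  unfolding lsum_def using M.finprod_mono_neutral_cong_left[of B A g g] by (auto simp: Pi_def)

lemma lsum_single: "i \<in> A \<Longrightarrow> finite A \<Longrightarrow> (\<And>x. x \<in> A \<Longrightarrow> x \<noteq> i \<Longrightarrow> g x = zer L) \<Longrightarrow>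
   (\<And>x. x \<in> A \<Longrightarrow> g x \<in> car L) \<Longrightarrow> lsum g A = g i"
proof -
  assume a: "i \<in> A" "finite A" "\<And>x. x \<in> A \<Longrightarrow> x \<noteq> i \<Longrightarrow> g x = zer L" "\<And>x. x \<in> A \<Longrightarrow> g x \<in> car L"
  have "lsum g {i} = lsum g A" using a by (intro lsum_mono_neutral) auto
  moreover have "lsum g {i} = g i" using lsum_insert[of "{}" i g] a by auto
  ultimately show ?thesis by simp
qed

lemma lsum_smul: "(\<And>x. x \<in> A \<Longrightarrow> g x \<in> car L) \<Longrightarrow> smul L c (lsum g A) = lsum (\<lambda>x. smul L c (g x)) A"
proof (induction A rule: infinite_finite_induct)
  case (infinite A) thus ?case by (simp add: lsum_infinite)
next
  case empty thus ?case by simp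
next
  case (insert a A)
  have "lsum g (insert a A) = add L (g a) (lsum g A)" using insert by (intro lsum_insert) auto
  moreover have "lsum (\<lambda>x. smul L c (g x)) (insert a A) = add L (smul L c (g a)) (lsum (\<lambda>x. smul L c (g x)) A)"
    using insert by (intro lsum_insert) auto
  ultimately show ?case using insert by (simp add: smul_add)
qed

lemma lsum_brl: "y \<in> car L \<Longrightarrow> (\<And>x. x \<in> A \<Longrightarrow> g x \<in> car L) \<Longrightarrow> br L (lsum g A) y = lsum (\<lambda>x. br L (g x) y) A"
proof (induction A rule: infinite_finite_induct)
  case (infinite A) thus ?case by (simp add: lsum_infinite)
next
  case empty thus ?case by simp
next
  case (insert a A)
  have "lsum g (insert a A) = add L (g a) (lsum g A)" using insert by (intro lsum_insert) auto
  moreover have "lsum (\<lambda>x. br L (g x) y) (insert a A) = add L (br L (g a) y) (lsum (\<lambda>x. br L (g x) y) A)"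
    using insert by (intro lsum_insert) auto
  ultimately show ?case using insert by (simp add: br_addl)
qed

lemma lsum_brr: "y \<in> car L \<Longrightarrow> (\<And>x. x \<in> A \<Longrightarrow> g x \<in> car L) \<Longrightarrow> br L y (lsum g A) = lsum (\<lambda>x. br L y (g x)) A"
proof (induction A rule: infinite_finite_induct)
  case (infinite A) thus ?case by (simp add: lsum_infinite)
next
  case empty thus ?case by simp
next
  case (insert a A)
  have "lsum g (insert a A) = add L (g a) (lsum g A)" using insert by (intro lsum_insert) auto
  moreover have "lsum (\<lambda>x. br L y (g x)) (insert a A) = add L (br L y (g a)) (lsum (\<lambda>x. br L y (g x)) A)"
    using insert by (intro lsum_insert) auto
  ultimately show ?case using insert by (simp add: br_addr)
qed

end

definition word :: "nat \<Rightarrow> (nat \<Rightarrow> nat) \<Rightarrow> nat list" where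
  "word n \<alpha> = concat (map (\<lambda>j. replicate (\<alpha> j) j) [0..<n])"

lemma word_set: "set (word n \<alpha>) \<subseteq> {..<n}"
  unfolding word_def by auto

lemma lnbr_append: "lnbr L x (ys @ zs) = lnbr L (lnbr L x ys) zs"
  by (simp add: lnbr_def)

lemma lnbr_Nil[simp]: "lnbr L x [] = x" by (simp add: lnbr_def)
lemma lnbr_Cons[simp]: "lnbr L x (y # ys) = lnbr L (br L x y) ys" by (simp add: lnbr_def)
lemma lnbr_snoc: "lnbr L x (ys @ [y]) = br L (lnbr L x ys) y" by (simp add: lnbr_def)

lemma word_upd: assumes "i < n"
  shows "\<exists>P R. word n \<alpha> = P @ replicate (\<alpha> i) i @ R \<and> word n (\<alpha>(i := Suc (\<alpha> i))) = P @ replicate (Suc (\<alpha> i)) i @ R"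
proof -
  have u0: "[0..<i + (n - i)] = [0..<i] @ [i..<i + (n - i)]"
    by (rule upt_add_eq_append) simp
  have u: "[0..<n] = [0..<i] @ i # [Suc i..<n]" using u0 assms upt_conv_Cons[OF assms] by simp
  let ?P = "concat (map (\<lambda>j. replicate (\<alpha> j) j) [0..<i])"
  let ?R = "concat (map (\<lambda>j. replicate (\<alpha> j) j) [Suc i..<n])"
  have m1: "map (\<lambda>j. replicate (if j = i then Suc (\<alpha> i) else \<alpha> j) j) [0..<i] = map (\<lambda>j. replicate (\<alpha> j) j) [0..<i]"
    by (intro map_cong) auto
  have m2: "map (\<lambda>j. replicate (if j = i then Suc (\<alpha> i) else \<alpha> j) j) [Suc i..<n] = map (\<lambda>j. replicate (\<alpha> j) j) [Suc i..<n]"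
    by (intro map_cong) auto
  have "word n \<alpha> = ?P @ replicate (\<alpha> i) i @ ?R \<and> word n (\<alpha>(i := Suc (\<alpha> i))) = ?P @ replicate (Suc (\<alpha> i)) i @ ?R"
    unfolding word_def u by (simp add: m1 m2)
  thus ?thesis by blast
qed

locale LR = LA L for L :: "('k::field, 'b) lie_alg" +
  fixes m n :: nat and a t :: "nat \<Rightarrow> 'b"
  assumes R: "wreath_relations L m n a t"
begin

lemma a_c[simp]: "k < m \<Longrightarrow> a k \<in> car L" using R unfolding wreath_relations_def by blast
lemma t_c[simp]: "i < n \<Longrightarrow> t i \<in> car L" using R unfolding wreath_relations_def by blast
lemma tt: "i < n \<Longrightarrow> j < n \<Longrightarrow> br L (t i) (t j) = zer L" using R unfolding wreath_relations_def by blast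
lemma rel: "k < m \<Longrightarrow> l < m \<Longrightarrow> set is \<subseteq> {..<n} \<Longrightarrow> set js \<subseteq> {..<n} \<Longrightarrow>
   br L (lnbr L (a k) (map t is)) (lnbr L (a l) (map t js)) = zer L"
  using R unfolding wreath_relations_def by blast

lemma lnbr_c[simp]: "x \<in> car L \<Longrightarrow> set ys \<subseteq> {..<n} \<Longrightarrow> lnbr L x (map t ys) \<in> car L"
  by (induction ys arbitrary: x) auto

lemma front: "v \<in> car L \<Longrightarrow> set zs \<subseteq> {..<n} \<Longrightarrow> x < n \<Longrightarrow>
    lnbr L v (map t (zs @ [x])) = lnbr L (br L v (t x)) (map t zs)"
proof (induction zs rule: rev_induct)
  case Nil thus ?case by simp
next
  case (snoc z zs)
  have zs: "set zs \<subseteq> {..<n}" and z: "z < n" using snoc by auto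
  have "lnbr L v (map t ((zs @ [z]) @ [x])) = br L (br L (lnbr L v (map t zs)) (t z)) (t x)"
    by (simp add: lnbr_def)
  also have "\<dots> = br L (br L (lnbr L v (map t zs)) (t x)) (t z)"
    using swap_t[of "lnbr L v (map t zs)" "t z" "t x"] snoc zs z tt by simp
  also have "br L (lnbr L v (map t zs)) (t x) = lnbr L v (map t (zs @ [x]))"
    by (simp add: lnbr_def)
  also have "\<dots> = lnbr L (br L v (t x)) (map t zs)" using snoc zs by simp
  finally show ?case by (simp add: lnbr_def)
qed

definition E :: "nat \<Rightarrow> (nat \<Rightarrow> nat) \<Rightarrow> 'b" where
  "E k \<alpha> = lnbr L (a k) (map t (word n \<alpha>))"

lemma E_c[simp]: "k < m \<Longrightarrow> E k \<alpha> \<in> car L"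
  unfolding E_def using word_set by simp

lemma E_rel: "k < m \<Longrightarrow> l < m \<Longrightarrow> br L (E k \<alpha>) (E l \<beta>) = zer L"
  unfolding E_def using rel word_set by blast

lemma E_shift: assumes k: "k < m" and i: "i < n"
  shows "E k (\<alpha>(i := Suc (\<alpha> i))) = br L (E k \<alpha>) (t i)"
proof -
  obtain P R where PR: "word n \<alpha> = P @ replicate (\<alpha> i) i @ R"
    "word n (\<alpha>(i := Suc (\<alpha> i))) = P @ replicate (Suc (\<alpha> i)) i @ R"
    using word_upd[OF i] by blast
  have sets: "set P \<subseteq> {..<n}" "set R \<subseteq> {..<n}" "set (replicate (\<alpha> i) i) \<subseteq> {..<n}"
    using word_set[of n \<alpha>] unfolding PR by auto
  define v where "v = lnbr L (a k) (map t (P @ replicate (\<alpha> i) i))"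
  have v: "v \<in> car L" unfolding v_def by (rule lnbr_c) (use sets k in auto)
  have "E k (\<alpha>(i := Suc (\<alpha> i))) = lnbr L v (map t (i # R))"
    unfolding E_def PR(2) v_def replicate_append_same[symmetric] replicate_Suc
    by (simp add: lnbr_append)
  also have "\<dots> = lnbr L v (map t (R @ [i]))" using front[OF v sets(2) i] by simp
  also have "\<dots> = br L (E k \<alpha>) (t i)"
    unfolding E_def PR(1) v_def by (simp add: lnbr_append lnbr_snoc)
  finally show ?thesis .
qed

end

definition supp :: "(nat \<Rightarrow> (nat \<Rightarrow> nat) \<Rightarrow> 'k::zero) \<Rightarrow> (nat \<times> (nat \<Rightarrow> nat)) set" where
  "supp b = {(k, \<alpha>). b k \<alpha> \<noteq> 0}"

definition good :: "nat \<Rightarrow> (nat \<Rightarrow> (nat \<Rightarrow> nat) \<Rightarrow> 'k::zero) \<Rightarrow> bool" where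
  "good m b \<longleftrightarrow> finite (supp b) \<and> (\<forall>k \<alpha>. b k \<alpha> \<noteq> 0 \<longrightarrow> k < m)"

definition sh :: "nat \<Rightarrow> (nat \<Rightarrow> (nat \<Rightarrow> nat) \<Rightarrow> 'k::zero) \<Rightarrow> nat \<Rightarrow> (nat \<Rightarrow> nat) \<Rightarrow> 'k" where
  "sh i b = (\<lambda>k \<beta>. if 0 < \<beta> i then b k (\<beta>(i := \<beta> i - 1)) else 0)"

lemma supp_sub_m: "good m b \<Longrightarrow> supp b \<subseteq> {p. fst p < m}"
  unfolding good_def supp_def by auto

lemma good_add: fixes b1 b2 :: "nat \<Rightarrow> (nat \<Rightarrow> nat) \<Rightarrow> 'k::field" shows "good m b1 \<Longrightarrow> good m b2 \<Longrightarrow> good m (\<lambda>k \<alpha>. b1 k \<alpha> + b2 k \<alpha>)"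
proof -
  assume g: "good m b1" "good m b2"
  have "supp (\<lambda>k \<alpha>. b1 k \<alpha> + b2 k \<alpha>) \<subseteq> supp b1 \<union> supp b2" unfolding supp_def by auto
  thus ?thesis using g unfolding good_def apply (auto intro: finite_subset) by (metis add.left_neutral)
qed

lemma good_smul: "good m b \<Longrightarrow> good m (\<lambda>k \<alpha>. (c::'k::field) * b k \<alpha>)"
proof -
  assume g: "good m b"
  have "supp (\<lambda>k \<alpha>. c * b k \<alpha>) \<subseteq> supp b" unfolding supp_def by auto
  thus ?thesis using g unfolding good_def by (auto intro: finite_subset)
qed

lemma good_zero: "good m (\<lambda>k \<alpha>. 0)" unfolding good_def supp_def by simp

definition shf :: "nat \<Rightarrow> nat \<times> (nat \<Rightarrow> nat) \<Rightarrow> nat \<times> (nat \<Rightarrow> nat)" where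
  "shf i p = (fst p, (snd p)(i := Suc (snd p i)))"

lemma inj_shf: "inj (shf i)"
proof (rule injI)
  fix p q assume "shf i p = shf i q"
  hence "fst p = fst q" "(snd p)(i := Suc (snd p i)) = (snd q)(i := Suc (snd q i))" unfolding shf_def by auto
  moreover have "snd p = snd q"
  proof
    fix j from calculation(2) have "((snd p)(i := Suc (snd p i))) j = ((snd q)(i := Suc (snd q i))) j" by simp
    thus "snd p j = snd q j" by (cases "j = i") auto
  qed
  ultimately show "p = q" by (simp add: prod_eq_iff)
qed

lemma supp_sh: "supp (sh i b) = shf i ` supp b"
proof (rule equalityI; rule subsetI)
  fix p assume "p \<in> supp (sh i b)"
  then obtain k \<beta> where p: "p = (k, \<beta>)" "0 < \<beta> i" "b k (\<beta>(i := \<beta> i - 1)) \<noteq> 0"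
    unfolding supp_def sh_def by (auto split: if_splits)
  have "shf i (k, \<beta>(i := \<beta> i - 1)) = p" using p unfolding shf_def by auto
  moreover have "(k, \<beta>(i := \<beta> i - 1)) \<in> supp b" using p unfolding supp_def by auto
  ultimately show "p \<in> shf i ` supp b" by (metis image_eqI)
next
  fix p assume "p \<in> shf i ` supp b"
  then obtain k \<alpha> where "p = (k, \<alpha>(i := Suc (\<alpha> i)))" "b k \<alpha> \<noteq> 0"
    unfolding supp_def shf_def by auto
  thus "p \<in> supp (sh i b)" unfolding supp_def sh_def by simp
qed

lemma good_sh: "good m b \<Longrightarrow> good m (sh i b)"
  unfolding good_def using supp_sh[of i b] by (auto simp: sh_def split: if_splits)

lemma sh_shf: "sh i b k (\<alpha>(i := Suc (\<alpha> i))) = b k \<alpha>"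
  unfolding sh_def by simp

lemma act_eq: "wr_act n b s = (\<lambda>k \<beta>. \<Sum>i\<in>{..<n}. s i * sh i b k \<beta>)"
  unfolding wr_act_def sh_def by (intro ext sum.cong) auto

context LR begin

definition FB :: "(nat \<Rightarrow> (nat \<Rightarrow> nat) \<Rightarrow> 'k) \<Rightarrow> 'b" where
  "FB b = lsum (\<lambda>p. smul L (b (fst p) (snd p)) (E (fst p) (snd p))) (supp b)"

definition FT :: "(nat \<Rightarrow> 'k) \<Rightarrow> 'b" where
  "FT s = lsum (\<lambda>i. smul L (s i) (t i)) {..<n}"

lemma FB_c[simp]: "good m b \<Longrightarrow> FB b \<in> car L"
  unfolding FB_def using supp_sub_m by (intro lsum_closed) fastforce

lemma FT_c[simp]: "FT s \<in> car L"
  unfolding FT_def by (intro lsum_closed) simp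

lemma FB_ext: assumes g: "good m b" and D: "finite D" "supp b \<subseteq> D" "D \<subseteq> {p. fst p < m}"
  shows "FB b = lsum (\<lambda>p. smul L (b (fst p) (snd p)) (E (fst p) (snd p))) D"
  unfolding FB_def
proof (rule lsum_mono_neutral)
  show "\<And>x. x \<in> D - supp b \<Longrightarrow> smul L (b (fst x) (snd x)) (E (fst x) (snd x)) = zer L"
    using D unfolding supp_def by auto
qed (use D in auto)

lemma FB_add: assumes g1: "good m b1" and g2: "good m b2"
  shows "FB (\<lambda>k \<alpha>. b1 k \<alpha> + b2 k \<alpha>) = add L (FB b1) (FB b2)"
proof -
  let ?D = "supp b1 \<union> supp b2"
  have fD: "finite ?D" "?D \<subseteq> {p. fst p < m}" using g1 g2 supp_sub_m unfolding good_def by auto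
  have s: "supp (\<lambda>k \<alpha>. b1 k \<alpha> + b2 k \<alpha>) \<subseteq> ?D" unfolding supp_def by auto
  have "FB (\<lambda>k \<alpha>. b1 k \<alpha> + b2 k \<alpha>) = lsum (\<lambda>p. smul L (b1 (fst p) (snd p) + b2 (fst p) (snd p)) (E (fst p) (snd p))) ?D"
    using FB_ext[OF good_add[OF g1 g2] fD(1) s fD(2)] by simp
  also have "\<dots> = lsum (\<lambda>p. add L (smul L (b1 (fst p) (snd p)) (E (fst p) (snd p))) (smul L (b2 (fst p) (snd p)) (E (fst p) (snd p)))) ?D"
    using fD(2) by (intro lsum_cong) (auto simp: add_smul)
  also have "\<dots> = add L (lsum (\<lambda>p. smul L (b1 (fst p) (snd p)) (E (fst p) (snd p))) ?D) (lsum (\<lambda>p. smul L (b2 (fst p) (snd p)) (E (fst p) (snd p))) ?D)"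
    using fD(2) by (intro lsum_add) auto
  also have "\<dots> = add L (FB b1) (FB b2)"
    using FB_ext[OF g1 fD(1) _ fD(2)] FB_ext[OF g2 fD(1) _ fD(2)] by auto
  finally show ?thesis .
qed

lemma FB_smul: assumes g: "good m b"
  shows "FB (\<lambda>k \<alpha>. c * b k \<alpha>) = smul L c (FB b)"
proof -
  let ?D = "supp b"
  have fD: "finite ?D" "?D \<subseteq> {p. fst p < m}" using g supp_sub_m unfolding good_def by auto
  have s: "supp (\<lambda>k \<alpha>. c * b k \<alpha>) \<subseteq> ?D" unfolding supp_def by auto
  have "FB (\<lambda>k \<alpha>. c * b k \<alpha>) = lsum (\<lambda>p. smul L (c * b (fst p) (snd p)) (E (fst p) (snd p))) ?D"
    using FB_ext[OF good_smul[OF g] fD(1) s fD(2)] by simp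
  also have "\<dots> = lsum (\<lambda>p. smul L c (smul L (b (fst p) (snd p)) (E (fst p) (snd p)))) ?D"
    using fD(2) by (intro lsum_cong) (auto simp: smul_smul)
  also have "\<dots> = smul L c (FB b)"
    unfolding FB_def using fD(2) by (intro lsum_smul[symmetric]) auto
  finally show ?thesis .
qed

lemma FB_zero: "FB (\<lambda>k \<alpha>. 0) = zer L"
  unfolding FB_def supp_def by simp

lemma FB_sh: assumes g: "good m b" and i: "i < n"
  shows "FB (sh i b) = br L (FB b) (t i)"
proof -
  have fD: "supp b \<subseteq> {p. fst p < m}" using g supp_sub_m by auto
  have "FB (sh i b) = lsum (\<lambda>p. smul L (sh i b (fst p) (snd p)) (E (fst p) (snd p))) (shf i ` supp b)"
    unfolding FB_def supp_sh ..
  also have "\<dots> = lsum (\<lambda>p. smul L (sh i b (fst (shf i p)) (snd (shf i p))) (E (fst (shf i p)) (snd (shf i p)))) (supp b)"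
    using fD inj_shf[of i] by (intro lsum_reindex) (auto simp: shf_def inj_on_def)
  also have "\<dots> = lsum (\<lambda>p. br L (smul L (b (fst p) (snd p)) (E (fst p) (snd p))) (t i)) (supp b)"
    using fD i by (intro lsum_cong) (auto simp: shf_def sh_shf E_shift br_smull)
  also have "\<dots> = br L (FB b) (t i)"
    unfolding FB_def using fD i by (intro lsum_brl[symmetric]) auto
  finally show ?thesis .
qed

lemma FB_act_gen: assumes g: "good m b" and I: "finite I" "I \<subseteq> {..<n}"
  shows "good m (\<lambda>k \<beta>. \<Sum>i\<in>I. s i * sh i b k \<beta>) \<and>
         FB (\<lambda>k \<beta>. \<Sum>i\<in>I. s i * sh i b k \<beta>) = lsum (\<lambda>i. smul L (s i) (FB (sh i b))) I"
  using I
proof (induction I rule: finite_induct)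
  case empty thus ?case by (simp add: good_zero FB_zero)
next
  case (insert j I)
  have eq: "(\<lambda>k \<beta>. \<Sum>i\<in>insert j I. s i * sh i b k \<beta>) = (\<lambda>k \<beta>. s j * sh j b k \<beta> + (\<Sum>i\<in>I. s i * sh i b k \<beta>))"
    using insert by simp
  have g1: "good m (\<lambda>k \<beta>. s j * sh j b k \<beta>)" using good_smul[OF good_sh[OF g]] by blast
  have IH: "good m (\<lambda>k \<beta>. \<Sum>i\<in>I. s i * sh i b k \<beta>)"
     "FB (\<lambda>k \<beta>. \<Sum>i\<in>I. s i * sh i b k \<beta>) = lsum (\<lambda>i. smul L (s i) (FB (sh i b))) I"
    using insert by auto
  have "lsum (\<lambda>i. smul L (s i) (FB (sh i b))) (insert j I) = add L (smul L (s j) (FB (sh j b))) (lsum (\<lambda>i. smul L (s i) (FB (sh i b))) I)"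
    using insert good_sh[OF g] by (intro lsum_insert) auto
  thus ?case unfolding eq using good_add[OF g1 IH(1)] FB_add[OF g1 IH(1)] IH(2) FB_smul[OF good_sh[OF g]]
    by simp
qed

lemma good_act: fixes b :: "nat \<Rightarrow> (nat \<Rightarrow> nat) \<Rightarrow> 'k" shows "good m b \<Longrightarrow> good m (wr_act n b s)"
  unfolding act_eq using FB_act_gen[of b "{..<n}" s] by simp

lemma FB_act: fixes b :: "nat \<Rightarrow> (nat \<Rightarrow> nat) \<Rightarrow> 'k" shows "good m b \<Longrightarrow> FB (wr_act n b s) = lsum (\<lambda>i. smul L (s i) (FB (sh i b))) {..<n}"
  unfolding act_eq using FB_act_gen[of b "{..<n}" s] by simp

lemma br_E_FB: "k < m \<Longrightarrow> good m b \<Longrightarrow> br L (E k \<alpha>) (FB b) = zer L"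
proof -
  assume k: "k < m" and g: "good m b"
  have fD: "supp b \<subseteq> {p. fst p < m}" using g supp_sub_m by auto
  have "br L (E k \<alpha>) (FB b) = lsum (\<lambda>p. br L (E k \<alpha>) (smul L (b (fst p) (snd p)) (E (fst p) (snd p)))) (supp b)"
    unfolding FB_def using fD k by (intro lsum_brr) auto
  also have "\<dots> = zer L" using fD k by (intro lsum_zero) (auto simp: br_smulr E_rel)
  finally show ?thesis .
qed

lemma br_FB_FB: "good m b1 \<Longrightarrow> good m b2 \<Longrightarrow> br L (FB b1) (FB b2) = zer L"
proof -
  assume g1: "good m b1" and g2: "good m b2"
  have fD: "supp b1 \<subseteq> {p. fst p < m}" using g1 supp_sub_m by auto
  have "br L (FB b1) (FB b2) = lsum (\<lambda>p. br L (smul L (b1 (fst p) (snd p)) (E (fst p) (snd p))) (FB b2)) (supp b1)"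
    unfolding FB_def[of b1] using fD g2 by (intro lsum_brl) auto
  also have "\<dots> = zer L" using fD g2 by (intro lsum_zero) (auto simp: br_smull br_E_FB)
  finally show ?thesis .
qed

lemma br_FT_FT: "br L (FT s1) (FT s2) = zer L"
proof -
  have "br L (FT s1) (FT s2) = lsum (\<lambda>i. br L (smul L (s1 i) (t i)) (FT s2)) {..<n}"
    unfolding FT_def[of s1] by (intro lsum_brl) auto
  also have "\<dots> = zer L"
  proof (intro lsum_zero)
    fix i assume i: "i \<in> {..<n}"
    have "br L (t i) (FT s2) = lsum (\<lambda>j. br L (t i) (smul L (s2 j) (t j))) {..<n}"
      unfolding FT_def using i by (intro lsum_brr) auto
    also have "\<dots> = zer L" using i by (intro lsum_zero) (auto simp: br_smulr tt)
    finally show "br L (smul L (s1 i) (t i)) (FT s2) = zer L" using i by (simp add: br_smull)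
  qed
  finally show ?thesis .
qed

lemma br_FB_FT: "good m b \<Longrightarrow> br L (FB b) (FT s) = FB (wr_act n b s)"
proof -
  assume g: "good m b"
  have "br L (FB b) (FT s) = lsum (\<lambda>i. br L (FB b) (smul L (s i) (t i))) {..<n}"
    unfolding FT_def using g by (intro lsum_brr) auto
  also have "\<dots> = lsum (\<lambda>i. smul L (s i) (FB (sh i b))) {..<n}"
    using g good_sh[OF g] by (intro lsum_cong) (auto simp: br_smulr FB_sh)
  also have "\<dots> = FB (wr_act n b s)" using FB_act[OF g] by simp
  finally show ?thesis .
qed

end

lemma W_simps[simp]:
  "car (wreath m n) = wr_carrier m n"
  "add (wreath m n) x y = (\<lambda>k \<alpha>. fst x k \<alpha> + fst y k \<alpha>, \<lambda>i. snd x i + snd y i)"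
  "zer (wreath m n) = (\<lambda>k \<alpha>. 0, \<lambda>i. 0)"
  "neg (wreath m n) x = (\<lambda>k \<alpha>. - fst x k \<alpha>, \<lambda>i. - snd x i)"
  "smul (wreath m n) c x = (\<lambda>k \<alpha>. c * fst x k \<alpha>, \<lambda>i. c * snd x i)"
  "br (wreath m n) x y = (\<lambda>k \<alpha>. wr_act n (fst x) (snd y) k \<alpha> - wr_act n (fst y) (snd x) k \<alpha>, \<lambda>i. 0)"
  by (simp_all add: wreath_def split: prod.splits)

lemma wa_add_b: "wr_act n (\<lambda>k \<alpha>. b1 k \<alpha> + b2 k \<alpha>) s k \<alpha> = wr_act n b1 s k \<alpha> + wr_act n b2 s k \<alpha>"
  unfolding wr_act_def by (subst sum.distrib[symmetric]) (rule sum.cong, auto simp: algebra_simps)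

lemma wa_diff_b: "wr_act n (\<lambda>k \<alpha>. b1 k \<alpha> - b2 k \<alpha>) s k \<alpha> = wr_act n b1 s k \<alpha> - wr_act n b2 s k \<alpha>"
  unfolding wr_act_def by (subst sum_subtractf[symmetric]) (rule sum.cong, auto simp: algebra_simps)

lemma wa_add_s: "wr_act n b (\<lambda>i. s1 i + s2 i) k \<alpha> = wr_act n b s1 k \<alpha> + wr_act n b s2 k \<alpha>"
  unfolding wr_act_def by (subst sum.distrib[symmetric]) (rule sum.cong, auto simp: algebra_simps)

lemma wa_smul_b: "wr_act n (\<lambda>k \<alpha>. c * b k \<alpha>) s k \<alpha> = c * wr_act n b s k \<alpha>"
  unfolding wr_act_def by (subst sum_distrib_left) (rule sum.cong, auto simp: algebra_simps)

lemma wa_smul_s: "wr_act n b (\<lambda>i. c * s i) k \<alpha> = c * wr_act n b s k \<alpha>"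
  unfolding wr_act_def by (subst sum_distrib_left) (rule sum.cong, auto simp: algebra_simps)

lemma wa_zero_s[simp]: "wr_act n b (\<lambda>i. 0) k \<alpha> = 0"
  unfolding wr_act_def by (rule sum.neutral) simp

lemma wa_zero_b[simp]: "wr_act n (\<lambda>k \<alpha>. 0) s k \<alpha> = 0"
  unfolding wr_act_def by (rule sum.neutral) simp

definition DD :: "(nat \<Rightarrow> 'k::field) \<Rightarrow> (nat \<Rightarrow> 'k) \<Rightarrow> (nat \<Rightarrow> (nat \<Rightarrow> nat) \<Rightarrow> 'k) \<Rightarrow> nat \<Rightarrow> (nat \<Rightarrow> nat) \<Rightarrow> nat \<Rightarrow> nat \<Rightarrow> 'k" where
  "DD s1 s2 b k \<beta> j i = (if 0 < \<beta> j \<and> 0 < (\<beta>(j := \<beta> j - 1)) i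
      then s2 j * s1 i * b k ((\<beta>(j := \<beta> j - 1))(i := (\<beta>(j := \<beta> j - 1)) i - 1)) else 0)"

lemma wa_dbl: "wr_act n (wr_act n b s1) s2 k \<beta> = (\<Sum>j<n. \<Sum>i<n. DD s1 s2 b k \<beta> j i)"
  unfolding wr_act_def[of n "wr_act n b s1"]
  apply (rule sum.cong, simp)
  subgoal for j by (cases "0 < \<beta> j") (auto simp: DD_def wr_act_def sum_distrib_left mult.assoc intro!: sum.cong sum.neutral[symmetric])
  done

lemma DD_sym: "DD s1 s2 b k \<beta> j i = DD s2 s1 b k \<beta> i j"
proof (cases "i = j")
  case True thus ?thesis unfolding DD_def by (simp add: mult.commute)
next
  case False
  have "(\<beta>(j := \<beta> j - 1))(i := (\<beta>(j := \<beta> j - 1)) i - 1) = (\<beta>(i := \<beta> i - 1))(j := (\<beta>(i := \<beta> i - 1)) j - 1)"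
    using False by (auto simp: fun_eq_iff)
  thus ?thesis unfolding DD_def using False by (auto simp: mult.commute)
qed

lemma wa_comm: "wr_act n (wr_act n b s1) s2 = wr_act n (wr_act n b s2) s1"
proof (intro ext)
  fix k \<beta>
  have "wr_act n (wr_act n b s1) s2 k \<beta> = (\<Sum>j<n. \<Sum>i<n. DD s2 s1 b k \<beta> i j)"
    unfolding wa_dbl by (simp add: DD_sym)
  also have "\<dots> = (\<Sum>i<n. \<Sum>j<n. DD s2 s1 b k \<beta> i j)" by (rule sum.swap)
  also have "\<dots> = wr_act n (wr_act n b s2) s1 k \<beta>" unfolding wa_dbl ..
  finally show "wr_act n (wr_act n b s1) s2 k \<beta> = wr_act n (wr_act n b s2) s1 k \<beta>" .
qed

definition cb :: "nat \<Rightarrow> nat \<Rightarrow> (nat \<Rightarrow> (nat \<Rightarrow> nat) \<Rightarrow> 'k::zero) \<Rightarrow> bool" where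
  "cb m n b \<longleftrightarrow> finite (supp b) \<and> (\<forall>k \<alpha>. b k \<alpha> \<noteq> 0 \<longrightarrow> k < m \<and> (\<forall>j\<ge>n. \<alpha> j = 0))"

lemma carrier_iff: "x \<in> wr_carrier m n \<longleftrightarrow> cb m n (fst x) \<and> (\<forall>i. snd x i \<noteq> 0 \<longrightarrow> i < n)"
  unfolding wr_carrier_def cb_def supp_def by (cases x) auto

lemma cb_good: "cb m n b \<Longrightarrow> good m b" unfolding cb_def good_def by auto

lemma wa_nz: assumes "wr_act n b s k \<beta> \<noteq> 0"
  shows "\<exists>i<n. 0 < \<beta> i \<and> b k (\<beta>(i := \<beta> i - 1)) \<noteq> 0"
proof (rule ccontr)
  assume "\<not> ?thesis"
  hence "wr_act n b s k \<beta> = 0" unfolding wr_act_def by (intro sum.neutral) auto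
  thus False using assms by simp
qed

lemma cb_act: assumes "cb m n b" shows "cb m n (wr_act n b s)"
proof -
  have "supp (wr_act n b s) \<subseteq> (\<Union>i<n. shf i ` supp b)"
  proof
    fix p assume "p \<in> supp (wr_act n b s)"
    then obtain k \<beta> where p: "p = (k, \<beta>)" "wr_act n b s k \<beta> \<noteq> 0" unfolding supp_def by auto
    then obtain i where i: "i < n" "0 < \<beta> i" "b k (\<beta>(i := \<beta> i - 1)) \<noteq> 0" using wa_nz by blast
    have "p = shf i (k, \<beta>(i := \<beta> i - 1))" using p i unfolding shf_def by auto
    moreover have "(k, \<beta>(i := \<beta> i - 1)) \<in> supp b" using i unfolding supp_def by auto
    ultimately show "p \<in> (\<Union>i<n. shf i ` supp b)" using i by blast
  qed
  moreover have "finite (\<Union>i<n. shf i ` supp b)" using assms unfolding cb_def by auto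
  ultimately have f: "finite (supp (wr_act n b s))" by (rule finite_subset)
  have "\<forall>k \<beta>. wr_act n b s k \<beta> \<noteq> 0 \<longrightarrow> k < m \<and> (\<forall>j\<ge>n. \<beta> j = 0)"
  proof (intro allI impI)
    fix k \<beta> assume "wr_act n b s k \<beta> \<noteq> 0"
    then obtain i where i: "i < n" "0 < \<beta> i" "b k (\<beta>(i := \<beta> i - 1)) \<noteq> 0" using wa_nz by blast
    hence "k < m \<and> (\<forall>j\<ge>n. (\<beta>(i := \<beta> i - 1)) j = 0)" using assms unfolding cb_def by blast
    thus "k < m \<and> (\<forall>j\<ge>n. \<beta> j = 0)" using i by (metis fun_upd_other leD)
  qed
  with f show ?thesis unfolding cb_def by blast
qed

lemma cb_add: assumes "cb m n b1" "cb m n b2" shows "cb m n (\<lambda>k \<alpha>. b1 k \<alpha> + (b2 k \<alpha>::'k::field))"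
proof -
  have "supp (\<lambda>k \<alpha>. b1 k \<alpha> + b2 k \<alpha>) \<subseteq> supp b1 \<union> supp b2" unfolding supp_def by auto
  thus ?thesis using assms unfolding cb_def apply (auto intro: finite_subset)
    by (metis add.left_neutral)+
qed

lemma cb_smul: assumes "cb m n b" shows "cb m n (\<lambda>k \<alpha>. (c::'k::field) * b k \<alpha>)"
proof -
  have "supp (\<lambda>k \<alpha>. c * b k \<alpha>) \<subseteq> supp b" unfolding supp_def by auto
  thus ?thesis using assms unfolding cb_def by (auto intro: finite_subset)
qed

lemma cb_diff: assumes "cb m n b1" "cb m n b2" shows "cb m n (\<lambda>k \<alpha>. b1 k \<alpha> - (b2 k \<alpha>::'k::field))"
  using cb_add[OF assms(1) cb_smul[OF assms(2), of "-1"]] by simp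

lemma W_lie: "lie_algebra (wreath m n :: ('k::field, 'k wr_elem) lie_alg)"
  unfolding lie_algebra_def
proof (intro conjI ballI allI)
  show "zer (wreath m n) \<in> car (wreath m n)" by (simp add: carrier_iff cb_def supp_def)
next
  fix x y :: "'k wr_elem" assume "x \<in> car (wreath m n)" "y \<in> car (wreath m n)"
  thus "add (wreath m n) x y \<in> car (wreath m n)" apply (auto simp: carrier_iff intro: cb_add) by (metis add.left_neutral)
next
  fix x :: "'k wr_elem" assume "x \<in> car (wreath m n)"
  thus "neg (wreath m n) x \<in> car (wreath m n)" using cb_smul[of m n "fst x" "-1"] by (auto simp: carrier_iff)
next
  fix x :: "'k wr_elem" and c assume "x \<in> car (wreath m n)"
  thus "smul (wreath m n) c x \<in> car (wreath m n)" using cb_smul[of m n "fst x" c] by (auto simp: carrier_iff)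
next
  fix x y :: "'k wr_elem" assume "x \<in> car (wreath m n)" "y \<in> car (wreath m n)"
  thus "br (wreath m n) x y \<in> car (wreath m n)" by (auto simp: carrier_iff intro!: cb_diff cb_act)
next
  fix x y z :: "'k wr_elem"
  show "add (wreath m n) (add (wreath m n) x y) z = add (wreath m n) x (add (wreath m n) y z)"
    by (simp add: algebra_simps)
  show "add (wreath m n) x y = add (wreath m n) y x" by (simp add: algebra_simps)
  show "add (wreath m n) (zer (wreath m n)) x = x" by simp
  show "add (wreath m n) (neg (wreath m n) x) x = zer (wreath m n)" by simp
  fix c d :: 'k
  show "smul (wreath m n) c (smul (wreath m n) d x) = smul (wreath m n) (c * d) x" by (simp add: algebra_simps)
  show "smul (wreath m n) 1 x = x" by simp
  show "smul (wreath m n) c (add (wreath m n) x y) = add (wreath m n) (smul (wreath m n) c x) (smul (wreath m n) c y)"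
    by (simp add: algebra_simps)
  show "smul (wreath m n) (c + d) x = add (wreath m n) (smul (wreath m n) c x) (smul (wreath m n) d x)"
    by (simp add: algebra_simps)
  show "br (wreath m n) (add (wreath m n) x y) z = add (wreath m n) (br (wreath m n) x z) (br (wreath m n) y z)"
    by (simp add: wa_add_b wa_add_s algebra_simps)
  show "br (wreath m n) x (add (wreath m n) y z) = add (wreath m n) (br (wreath m n) x y) (br (wreath m n) x z)"
    by (simp add: wa_add_b wa_add_s algebra_simps)
  show "br (wreath m n) (smul (wreath m n) c x) y = smul (wreath m n) c (br (wreath m n) x y)"
    by (simp add: wa_smul_b wa_smul_s algebra_simps)
  show "br (wreath m n) x (smul (wreath m n) c y) = smul (wreath m n) c (br (wreath m n) x y)"
    by (simp add: wa_smul_b wa_smul_s algebra_simps)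
  show "br (wreath m n) x x = zer (wreath m n)" by simp
  obtain b1 s1 b2 s2 b3 s3 where xyz: "x = (b1, s1)" "y = (b2, s2)" "z = (b3, s3)" by (cases x, cases y, cases z) auto
  have c1: "wr_act n (wr_act n b2 s3) s1 = wr_act n (wr_act n b2 s1) s3" by (rule wa_comm)
  have c2: "wr_act n (wr_act n b3 s2) s1 = wr_act n (wr_act n b3 s1) s2" by (rule wa_comm)
  have c3: "wr_act n (wr_act n b1 s3) s2 = wr_act n (wr_act n b1 s2) s3" by (rule wa_comm)
  show "add (wreath m n) (add (wreath m n) (br (wreath m n) x (br (wreath m n) y z)) (br (wreath m n) y (br (wreath m n) z x)))
        (br (wreath m n) z (br (wreath m n) x y)) = zer (wreath m n)"
    unfolding xyz by (simp add: wa_diff_b c1 c2 c3)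
qed

abbreviation WW :: "nat \<Rightarrow> nat \<Rightarrow> ('k::field, 'k wr_elem) lie_alg" where "WW m n \<equiv> wreath m n"

lemma wa_in: "k < m \<Longrightarrow> (wr_a k :: 'k::field wr_elem) \<in> wr_carrier m n"
proof -
  assume k: "k < m"
  have "supp (fst (wr_a k :: 'k wr_elem)) \<subseteq> {(k, \<lambda>_. 0)}" unfolding supp_def wr_a_def by auto
  hence "finite (supp (fst (wr_a k :: 'k wr_elem)))" by (rule finite_subset) simp
  thus ?thesis using k unfolding carrier_iff cb_def by (auto simp: wr_a_def split: if_splits)
qed

lemma wt_in: "i < n \<Longrightarrow> (wr_t i :: 'k::field wr_elem) \<in> wr_carrier m n"
  unfolding carrier_iff cb_def supp_def wr_t_def by auto

lemma snd_lnbr: "snd x = (\<lambda>i. 0) \<Longrightarrow> snd (lnbr (wreath m n) x ys) = (\<lambda>i. (0::'k::field))"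
  by (induction ys arbitrary: x) auto

lemma W_rel: "wreath_relations (wreath m n :: ('k::field, 'k wr_elem) lie_alg) m n wr_a wr_t"
proof -
  have h1: "\<forall>k<m. (wr_a k :: 'k wr_elem) \<in> car (wreath m n)" using wa_in by auto
  have h2: "\<forall>i<n. (wr_t i :: 'k wr_elem) \<in> car (wreath m n)" using wt_in by auto
  have h3: "\<forall>i<n. \<forall>j<n. br (wreath m n) (wr_t i) (wr_t j) = (zer (wreath m n) :: 'k wr_elem)"
    by (simp add: wr_t_def)
  have h4: "br (wreath m n) (lnbr (wreath m n) (wr_a k) (map wr_t is)) (lnbr (wreath m n) (wr_a l) (map wr_t js)) =
    (zer (wreath m n) :: 'k wr_elem)" for k l "is" js
  proof -
    have "snd (lnbr (wreath m n) (wr_a k) (map wr_t is)) = (\<lambda>i. (0::'k))"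
      by (rule snd_lnbr) (simp add: wr_a_def)
    moreover have "snd (lnbr (wreath m n) (wr_a l) (map wr_t js)) = (\<lambda>i. (0::'k))"
      by (rule snd_lnbr) (simp add: wr_a_def)
    ultimately show ?thesis by simp
  qed
  show ?thesis unfolding wreath_relations_def using h1 h2 h3 h4 by blast
qed

definition delta :: "nat \<Rightarrow> (nat \<Rightarrow> nat) \<Rightarrow> 'k::field wr_elem" where
  "delta k \<alpha> = (\<lambda>k' \<alpha>'. if k' = k \<and> \<alpha>' = \<alpha> then 1 else 0, \<lambda>i. 0)"

lemma wa_e: "i < n \<Longrightarrow> wr_act n b (\<lambda>j. if j = i then 1 else 0) = sh i b"
proof (intro ext)
  fix k \<alpha> assume i: "i < n"
  have "\<And>j. (if 0 < \<alpha> j then (if j = i then 1 else 0) * b k (\<alpha>(j := \<alpha> j - 1)) else 0) =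
     (if j = i then (if 0 < \<alpha> i then b k (\<alpha>(i := \<alpha> i - 1)) else 0) else 0)" by auto
  hence "wr_act n b (\<lambda>j. if j = i then 1 else 0) k \<alpha> = (\<Sum>j<n. if j = i then (if 0 < \<alpha> i then b k (\<alpha>(i := \<alpha> i - 1)) else 0) else 0)"
    unfolding wr_act_def by simp
  also have "\<dots> = sh i b k \<alpha>" using i by (subst sum.delta) (auto simp: sh_def)
  finally show "wr_act n b (\<lambda>j. if j = i then 1 else 0) k \<alpha> = sh i b k \<alpha>" .
qed

lemma shift_iff: "(0 < \<beta> i \<and> \<beta>(i := \<beta> i - 1) = \<alpha>) \<longleftrightarrow> \<beta> = \<alpha>(i := Suc (\<alpha> i))"
proof
  assume h: "0 < \<beta> i \<and> \<beta>(i := \<beta> i - 1) = \<alpha>"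
  have e: "\<And>x. \<alpha> x = (\<beta>(i := \<beta> i - 1)) x" using h by simp
  show "\<beta> = \<alpha>(i := Suc (\<alpha> i))" using h by (auto simp: fun_eq_iff e)
next
  assume "\<beta> = \<alpha>(i := Suc (\<alpha> i))"
  thus "0 < \<beta> i \<and> \<beta>(i := \<beta> i - 1) = \<alpha>" by (auto simp: fun_eq_iff)
qed

lemma br_delta: "i < n \<Longrightarrow> br (wreath m n) (delta k \<alpha>) (wr_t i) = (delta k (\<alpha>(i := Suc (\<alpha> i))) :: 'k::field wr_elem)"
proof -
  assume i: "i < n"
  have "wr_act n (fst (delta k \<alpha> :: 'k::field wr_elem)) (snd (wr_t i :: 'k wr_elem)) = sh i (fst (delta k \<alpha>))"
    unfolding wr_t_def using wa_e[OF i] by simp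
  moreover have "sh i (fst (delta k \<alpha> :: 'k wr_elem)) = fst (delta k (\<alpha>(i := Suc (\<alpha> i))) :: 'k wr_elem)"
    unfolding sh_def delta_def using shift_iff[of _ i \<alpha>] by (auto simp: fun_eq_iff)
  ultimately show ?thesis by (simp add: delta_def wr_t_def fun_eq_iff)
qed

lemma sub_facts: assumes "lie_subalgebra L S"
  shows "zer L \<in> S" "x \<in> S \<Longrightarrow> y \<in> S \<Longrightarrow> add L x y \<in> S" "x \<in> S \<Longrightarrow> smul L c x \<in> S"
    "x \<in> S \<Longrightarrow> y \<in> S \<Longrightarrow> br L x y \<in> S"
  using assms unfolding lie_subalgebra_def by blast+

lemma gen_delta: assumes S: "lie_subalgebra (wreath m n) S" and G: "wr_a ` {..<m} \<union> wr_t ` {..<n} \<subseteq> S"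
  and k: "k < m"
  shows "(\<forall>j\<ge>n. \<alpha> j = 0) \<Longrightarrow> sum \<alpha> {..<n} = N \<Longrightarrow> (delta k \<alpha> :: 'k::field wr_elem) \<in> S"
proof (induction N arbitrary: \<alpha>)
  case 0
  hence "\<alpha> = (\<lambda>_. 0)" by (auto simp: fun_eq_iff) (metis lessThan_iff not_le)
  hence "delta k \<alpha> = wr_a k" unfolding delta_def wr_a_def by simp
  thus ?case using G k by auto
next
  case (Suc N)
  obtain i where i: "i < n" "0 < \<alpha> i"
    using Suc.prems(2) by (metis lessThan_iff sum_eq_0_iff finite_lessThan gr0I nat.distinct(1))
  define \<alpha>' where "\<alpha>' = \<alpha>(i := \<alpha> i - 1)"
  have a: "\<alpha> = \<alpha>'(i := Suc (\<alpha>' i))" unfolding \<alpha>'_def using i by (auto simp: fun_eq_iff)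
  have "sum \<alpha> {..<n} = \<alpha> i + sum \<alpha> ({..<n} - {i})" using i by (simp add: sum.remove)
  moreover have "sum \<alpha>' {..<n} = \<alpha>' i + sum \<alpha>' ({..<n} - {i})" using i by (simp add: sum.remove)
  moreover have "sum \<alpha>' ({..<n} - {i}) = sum \<alpha> ({..<n} - {i})" unfolding \<alpha>'_def by (intro sum.cong) auto
  ultimately have "sum \<alpha>' {..<n} = N" using Suc.prems(2) i unfolding \<alpha>'_def by simp
  moreover have "\<forall>j\<ge>n. \<alpha>' j = 0" using Suc.prems(1) i unfolding \<alpha>'_def by auto
  ultimately have "(delta k \<alpha>' :: 'k wr_elem) \<in> S" using Suc.IH by blast
  moreover have "wr_t i \<in> S" using G i by auto
  ultimately have mem: "br (wreath m n) (delta k \<alpha>') (wr_t i) \<in> S" using sub_facts(4)[OF S] by blast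
  have e: "br (wreath m n) (delta k \<alpha>') (wr_t i) = (delta k \<alpha> :: 'k wr_elem)"
    unfolding a by (rule br_delta[OF i(1)])
  show ?case using mem unfolding e .
qed

lemma gen_t: assumes S: "lie_subalgebra (wreath m n) S" and G: "wr_a ` {..<m} \<union> wr_t ` {..<n} \<subseteq> S"
  and s: "\<forall>i. s i \<noteq> 0 \<longrightarrow> i < n"
  shows "((\<lambda>k \<alpha>. 0, \<lambda>j. if j < N then s j else 0) :: 'k::field wr_elem) \<in> S"
proof (induction N)
  case 0 thus ?case using sub_facts(1)[OF S] by simp
next
  case (Suc N)
  show ?case
  proof (cases "N < n")
    case True
    hence "wr_t N \<in> S" using G by auto
    hence "add (wreath m n) (\<lambda>k \<alpha>. 0, \<lambda>j. if j < N then s j else 0) (smul (wreath m n) (s N) (wr_t N)) \<in> S"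
      using Suc sub_facts(2,3)[OF S] by blast
    moreover have "add (wreath m n) (\<lambda>k \<alpha>. 0, \<lambda>j. if j < N then s j else 0) (smul (wreath m n) (s N) (wr_t N))
       = ((\<lambda>k \<alpha>. 0, \<lambda>j. if j < Suc N then s j else 0) :: 'k wr_elem)"
      by (auto simp: wr_t_def fun_eq_iff less_Suc_eq)
    ultimately show ?thesis by simp
  next
    case False
    hence "s N = 0" using s by auto
    hence "(\<lambda>j. if j < Suc N then s j else 0) = (\<lambda>j. if j < N then s j else 0)"
      by (auto simp: fun_eq_iff less_Suc_eq)
    thus ?thesis using Suc by simp
  qed
qed

lemma gen_b: assumes S: "lie_subalgebra (wreath m n) S" and G: "wr_a ` {..<m} \<union> wr_t ` {..<n} \<subseteq> S"
  and D: "finite D"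
  shows "\<forall>b. cb m n b \<and> supp b \<subseteq> D \<longrightarrow> ((b, \<lambda>i. 0) :: 'k::field wr_elem) \<in> S"
  using D
proof (induction D rule: finite_induct)
  case empty
  { fix b :: "nat \<Rightarrow> (nat \<Rightarrow> nat) \<Rightarrow> 'k" assume "supp b \<subseteq> {}"
    hence "b = (\<lambda>k \<alpha>. 0)" unfolding supp_def by (auto simp: fun_eq_iff)
    hence "((b, \<lambda>i. 0) :: 'k wr_elem) \<in> S" using sub_facts(1)[OF S] by simp }
  thus ?case by blast
next
  case (insert p D)
  show ?case
  proof (intro allI impI)
    fix b :: "nat \<Rightarrow> (nat \<Rightarrow> nat) \<Rightarrow> 'k" assume b: "cb m n b \<and> supp b \<subseteq> insert p D"
    obtain k \<alpha> where p: "p = (k, \<alpha>)" by (cases p)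
    define b' where "b' = (\<lambda>k' \<alpha>'. if k' = k \<and> \<alpha>' = \<alpha> then 0 else b k' \<alpha>')"
    have "supp b' \<subseteq> supp b" unfolding b'_def supp_def by auto
    hence cb': "cb m n b'" using b unfolding cb_def b'_def by (auto intro: finite_subset)
    have "supp b' \<subseteq> D" using b insert(2) unfolding b'_def supp_def p by auto
    hence b'S: "((b', \<lambda>i. 0) :: 'k wr_elem) \<in> S" using insert.IH cb' by blast
    show "((b, \<lambda>i. 0) :: 'k wr_elem) \<in> S"
    proof (cases "b k \<alpha> = 0")
      case True
      hence "b' = b" unfolding b'_def by (intro ext) auto
      thus ?thesis using b'S by simp
    next
      case False
      hence km: "k < m" and an: "\<forall>j\<ge>n. \<alpha> j = 0" using b unfolding cb_def by auto
      have "(delta k \<alpha> :: 'k wr_elem) \<in> S" using gen_delta[OF S G km an] by blast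
      hence "add (wreath m n) (b', \<lambda>i. 0) (smul (wreath m n) (b k \<alpha>) (delta k \<alpha>)) \<in> S"
        using b'S sub_facts(2,3)[OF S] by blast
      moreover have "add (wreath m n) (b', \<lambda>i. 0) (smul (wreath m n) (b k \<alpha>) (delta k \<alpha>)) = ((b, \<lambda>i. 0) :: 'k wr_elem)"
        unfolding b'_def delta_def by (rule prod_eqI) (auto intro!: ext)
      ultimately show ?thesis by simp
    qed
  qed
qed

lemma W_gen: "lie_generates (wreath m n :: ('k::field, 'k wr_elem) lie_alg) (wr_a ` {..<m} \<union> wr_t ` {..<n})"
  unfolding lie_generates_def
proof (intro conjI allI impI)
  show "wr_a ` {..<m} \<union> wr_t ` {..<n} \<subseteq> (car (wreath m n) :: 'k wr_elem set)"
    using wa_in wt_in by auto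
  fix S :: "'k wr_elem set" assume SG: "lie_subalgebra (wreath m n) S \<and> wr_a ` {..<m} \<union> wr_t ` {..<n} \<subseteq> S"
  hence S: "lie_subalgebra (wreath m n) S" and G: "wr_a ` {..<m} \<union> wr_t ` {..<n} \<subseteq> S" by auto
  show "car (wreath m n) \<subseteq> S"
  proof
    fix x :: "'k wr_elem" assume "x \<in> car (wreath m n)"
    hence x: "cb m n (fst x)" "\<forall>i. snd x i \<noteq> 0 \<longrightarrow> i < n" by (auto simp: carrier_iff)
    have "finite (supp (fst x))" using x unfolding cb_def by auto
    hence 1: "((fst x, \<lambda>i. 0) :: 'k wr_elem) \<in> S" using gen_b[OF S G] x by blast
    have "((\<lambda>k \<alpha>. 0, \<lambda>j. if j < n then snd x j else 0) :: 'k wr_elem) \<in> S" using gen_t[OF S G x(2)] by blast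
    moreover have "(\<lambda>j. if j < n then snd x j else 0) = snd x" using x(2) by (auto simp: fun_eq_iff)
    ultimately have 2: "((\<lambda>k \<alpha>. 0, snd x) :: 'k wr_elem) \<in> S" by simp
    have "add (wreath m n) (fst x, \<lambda>i. 0) (\<lambda>k \<alpha>. 0, snd x) \<in> S" using 1 2 sub_facts(2)[OF S] by blast
    thus "x \<in> S" by (cases x) simp
  qed
qed

context LA begin
lemma add4: "x \<in> car L \<Longrightarrow> y \<in> car L \<Longrightarrow> z \<in> car L \<Longrightarrow> w \<in> car L \<Longrightarrow>
  add L (add L x y) (add L z w) = add L (add L x z) (add L y w)"
  by (metis add_assoc add_comm add_c)
end

context LR begin

lemma FT_add: "FT (\<lambda>i. s1 i + s2 i) = add L (FT s1) (FT s2)"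
proof -
  have "FT (\<lambda>i. s1 i + s2 i) = lsum (\<lambda>i. add L (smul L (s1 i) (t i)) (smul L (s2 i) (t i))) {..<n}"
    unfolding FT_def by (intro lsum_cong) (auto simp: add_smul)
  also have "\<dots> = add L (FT s1) (FT s2)" unfolding FT_def by (intro lsum_add) auto
  finally show ?thesis .
qed

lemma FT_smul: "FT (\<lambda>i. c * s i) = smul L c (FT s)"
proof -
  have "FT (\<lambda>i. c * s i) = lsum (\<lambda>i. smul L c (smul L (s i) (t i))) {..<n}"
    unfolding FT_def by (intro lsum_cong) (auto simp: smul_smul)
  also have "\<dots> = smul L c (FT s)" unfolding FT_def by (intro lsum_smul[symmetric]) auto
  finally show ?thesis .
qed

lemma FT_zero: "FT (\<lambda>i. 0) = zer L"
  unfolding FT_def by (intro lsum_zero) auto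

lemma FT_delta: "i < n \<Longrightarrow> FT (snd (wr_t i :: 'k wr_elem)) = t i"
  unfolding FT_def wr_t_def by (subst lsum_single[of i]) auto

lemma word_zero: "word n (\<lambda>_. 0) = []" unfolding word_def by simp

lemma FB_wa: assumes k: "k < m" shows "FB (fst (wr_a k :: 'k wr_elem)) = a k"
proof -
  have s: "supp (fst (wr_a k :: 'k wr_elem)) = {(k, \<lambda>_. 0)}" unfolding supp_def wr_a_def by auto
  have "FB (fst (wr_a k :: 'k wr_elem)) = smul L 1 (E k (\<lambda>_. 0))"
    unfolding FB_def s by (subst lsum_single[of "(k, \<lambda>_. 0)"]) (auto simp: wr_a_def k)
  also have "\<dots> = a k" using k by (simp add: E_def word_zero)
  finally show ?thesis .
qed

definition ff :: "'k wr_elem \<Rightarrow> 'b" where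
  "ff x = add L (FB (fst x)) (FT (snd x))"

lemma ff_hom: "lie_hom (wreath m n) L ff"
  unfolding lie_hom_def
proof (intro conjI ballI allI)
  fix x :: "'k wr_elem" assume "x \<in> car (wreath m n)"
  hence "good m (fst x)" by (auto simp: carrier_iff cb_good)
  thus "ff x \<in> car L" unfolding ff_def by simp
next
  fix x y :: "'k wr_elem" assume "x \<in> car (wreath m n)" "y \<in> car (wreath m n)"
  hence g: "good m (fst x)" "good m (fst y)" by (auto simp: carrier_iff cb_good)
  show "ff (add (wreath m n) x y) = add L (ff x) (ff y)"
    unfolding ff_def using g by (simp add: FB_add FT_add add4)
next
  fix x :: "'k wr_elem" and c assume "x \<in> car (wreath m n)"
  hence g: "good m (fst x)" by (auto simp: carrier_iff cb_good)
  show "ff (smul (wreath m n) c x) = smul L c (ff x)"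
    unfolding ff_def using g by (simp add: FB_smul FT_smul smul_add)
next
  fix x y :: "'k wr_elem" assume "x \<in> car (wreath m n)" "y \<in> car (wreath m n)"
  hence g: "good m (fst x)" "good m (fst y)" by (auto simp: carrier_iff cb_good)
  have gx: "good m (wr_act n (fst x) (snd y))" "good m (wr_act n (fst y) (snd x))"
    using g good_act by auto
  have eqf: "(\<lambda>k \<alpha>. wr_act n (fst x) (snd y) k \<alpha> - wr_act n (fst y) (snd x) k \<alpha>)
      = (\<lambda>k \<alpha>. wr_act n (fst x) (snd y) k \<alpha> + (-1) * wr_act n (fst y) (snd x) k \<alpha>)" by simp
  have "ff (br (wreath m n) x y) = add L (FB (\<lambda>k \<alpha>. wr_act n (fst x) (snd y) k \<alpha> + (-1) * wr_act n (fst y) (snd x) k \<alpha>)) (FT (\<lambda>i. 0))"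
    unfolding ff_def W_simps fst_conv snd_conv eqf ..
  also have "\<dots> = add L (add L (FB (wr_act n (fst x) (snd y))) (smul L (-1) (FB (wr_act n (fst y) (snd x))))) (zer L)"
    by (simp only: FB_add[OF gx(1) good_smul[OF gx(2)]] FB_smul[OF gx(2)] FT_zero)
  finally have l: "ff (br (wreath m n) x y) = add L (FB (wr_act n (fst x) (snd y))) (smul L (-1) (FB (wr_act n (fst y) (snd x))))"
    using gx by simp
  have "br L (ff x) (ff y) = add L (add L (br L (FB (fst x)) (FB (fst y))) (br L (FT (snd x)) (FB (fst y))))
       (add L (br L (FB (fst x)) (FT (snd y))) (br L (FT (snd x)) (FT (snd y))))"
    unfolding ff_def using g by (simp add: br_addl br_addr)
  also have "\<dots> = add L (smul L (-1) (FB (wr_act n (fst y) (snd x)))) (FB (wr_act n (fst x) (snd y)))"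
    using g gx by (simp add: br_FB_FB br_FT_FT br_FB_FT br_anti[of "FB (fst y)" "FT (snd x)"])
  also have "\<dots> = add L (FB (wr_act n (fst x) (snd y))) (smul L (-1) (FB (wr_act n (fst y) (snd x))))"
    using gx by (intro add_comm) auto
  finally show "ff (br (wreath m n) x y) = br L (ff x) (ff y)" using l by simp
qed

lemma ff_a: "k < m \<Longrightarrow> ff (wr_a k) = a k"
  unfolding ff_def using FB_wa[of k] by (simp add: wr_a_def FT_zero)

lemma ff_t: "i < n \<Longrightarrow> ff (wr_t i) = t i"
  unfolding ff_def using FT_delta[of i] by (simp add: wr_t_def FB_zero)

end

lemma hom_smul: "lie_hom L M f \<Longrightarrow> x \<in> car L \<Longrightarrow> f (smul L c x) = smul M c (f x)"
  unfolding lie_hom_def by blast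

lemma hom_add: "lie_hom L M f \<Longrightarrow> x \<in> car L \<Longrightarrow> y \<in> car L \<Longrightarrow> f (add L x y) = add M (f x) (f y)"
  unfolding lie_hom_def by blast
lemma hom_br: "lie_hom L M f \<Longrightarrow> x \<in> car L \<Longrightarrow> y \<in> car L \<Longrightarrow> f (br L x y) = br M (f x) (f y)"
  unfolding lie_hom_def by blast
lemma hom_c: "lie_hom L M f \<Longrightarrow> x \<in> car L \<Longrightarrow> f x \<in> car M"
  unfolding lie_hom_def by blast

lemma uniq: assumes L: "lie_algebra (L :: ('k::field, 'b) lie_alg)"
  and f: "lie_hom (wreath m n) L f" and g: "lie_hom (wreath m n) L g"
  and ea: "\<forall>k<m. g (wr_a k) = f (wr_a k)" and et: "\<forall>i<n. g (wr_t i) = f (wr_t i)"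
  and x: "x \<in> car (wreath m n)"
  shows "g x = f x"
proof -
  interpret LA L by (rule LA.intro[OF L])
  let ?S = "{x \<in> car (wreath m n). g x = f x}"
  have WL: "lie_algebra (wreath m n :: ('k, 'k wr_elem) lie_alg)" by (rule W_lie)
  interpret W: LA "wreath m n :: ('k, 'k wr_elem) lie_alg" by (rule LA.intro[OF WL])
  have zW: "zer (wreath m n) \<in> car (wreath m n :: ('k, 'k wr_elem) lie_alg)" using WL unfolding lie_algebra_def by blast
  have hz: "h (zer (wreath m n)) = zer L" if h: "lie_hom (wreath m n) L h" for h
  proof -
    have "zer (wreath m n) = smul (wreath m n) 0 (zer (wreath m n) :: 'k wr_elem)" by simp
    hence "h (zer (wreath m n)) = smul L 0 (h (zer (wreath m n)))" using hom_smul[OF h zW, of 0] by simp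
    also have "\<dots> = zer L" using hom_c[OF h zW] by simp
    finally show ?thesis .
  qed
  have "lie_subalgebra (wreath m n) ?S"
    unfolding lie_subalgebra_def
  proof (intro conjI ballI allI)
    show "?S \<subseteq> car (wreath m n)" by auto
    show "zer (wreath m n) \<in> ?S" using zW hz[OF f] hz[OF g] by simp
  next
    fix x y assume "x \<in> ?S" "y \<in> ?S"
    hence xc: "x \<in> car (wreath m n)" "y \<in> car (wreath m n)" "g x = f x" "g y = f y" by auto
    show "add (wreath m n) x y \<in> ?S" using W.add_c[OF xc(1,2)] hom_add[OF g xc(1,2)] hom_add[OF f xc(1,2)] xc(3,4) by simp
  next
    fix x assume xS: "x \<in> ?S"
    have e: "neg (wreath m n) x = smul (wreath m n) (-1) x" by simp
    have xc: "x \<in> car (wreath m n)" and gf: "g x = f x" using xS by auto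
    have "smul (wreath m n) (-1) x \<in> car (wreath m n)" using W.smul_c[OF xc] .
    moreover have "g (smul (wreath m n) (-1) x) = f (smul (wreath m n) (-1) x)"
      using hom_smul[OF g xc, of "-1"] hom_smul[OF f xc, of "-1"] gf by simp
    ultimately show "neg (wreath m n) x \<in> ?S" unfolding e by blast
  next
    fix x c assume "x \<in> ?S"
    hence xc: "x \<in> car (wreath m n)" "g x = f x" by auto
    show "smul (wreath m n) c x \<in> ?S" using W.smul_c[OF xc(1)] hom_smul[OF g xc(1)] hom_smul[OF f xc(1)] xc(2) by simp
  next
    fix x y assume "x \<in> ?S" "y \<in> ?S"
    hence xc: "x \<in> car (wreath m n)" "y \<in> car (wreath m n)" "g x = f x" "g y = f y" by auto
    show "br (wreath m n) x y \<in> ?S" using W.br_c[OF xc(1,2)] hom_br[OF g xc(1,2)] hom_br[OF f xc(1,2)] xc(3,4) by simp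
  qed
  moreover have "wr_a ` {..<m} \<union> wr_t ` {..<n} \<subseteq> ?S"
  proof -
    have "wr_a k \<in> ?S" if "k < m" for k using wa_in[OF that, of n] ea that by simp
    moreover have "wr_t i \<in> ?S" if "i < n" for i using wt_in[OF that, of m] et that by simp
    ultimately show ?thesis by blast
  qed
  ultimately have sg: "lie_subalgebra (wreath m n) ?S \<and> wr_a ` {..<m} \<union> wr_t ` {..<n} \<subseteq> ?S" by (rule conjI)
  have "\<forall>S. lie_subalgebra (wreath m n) S \<and> wr_a ` {..<m} \<union> wr_t ` {..<n} \<subseteq> S \<longrightarrow> car (wreath m n :: ('k, 'k wr_elem) lie_alg) \<subseteq> S"
    using W_gen[where 'k='k] unfolding lie_generates_def by (rule conjunct2)
  hence "lie_subalgebra (wreath m n) ?S \<and> wr_a ` {..<m} \<union> wr_t ` {..<n} \<subseteq> ?S \<longrightarrow> car (wreath m n) \<subseteq> ?S"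
    by (rule spec)
  hence "car (wreath m n) \<subseteq> ?S" using sg by (rule mp)
  thus ?thesis using x by auto
qed

theorem corollary2:
  fixes m n :: nat
  assumes char_ne_2: "(2::'k::field) \<noteq> 0"
  shows "lie_algebra (wreath m n :: ('k, 'k wr_elem) lie_alg)
    \<and> wreath_relations (wreath m n :: ('k, 'k wr_elem) lie_alg) m n wr_a wr_t
    \<and> lie_generates (wreath m n :: ('k, 'k wr_elem) lie_alg) (wr_a ` {..<m} \<union> wr_t ` {..<n})
    \<and> (\<forall>(L :: ('k, 'b) lie_alg) a t. lie_algebra L \<and> wreath_relations L m n a t \<longrightarrow>
         (\<exists>f. lie_hom (wreath m n) L f \<and> (\<forall>k<m. f (wr_a k) = a k) \<and> (\<forall>i<n. f (wr_t i) = t i) \<and>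
              (\<forall>g. lie_hom (wreath m n) L g \<and> (\<forall>k<m. g (wr_a k) = a k) \<and> (\<forall>i<n. g (wr_t i) = t i)
                   \<longrightarrow> (\<forall>x\<in>car (wreath m n). g x = f x))))"
proof (intro conjI allI impI)
  show "lie_algebra (wreath m n :: ('k, 'k wr_elem) lie_alg)" by (rule W_lie)
  show "wreath_relations (wreath m n :: ('k, 'k wr_elem) lie_alg) m n wr_a wr_t" by (rule W_rel)
  show "lie_generates (wreath m n :: ('k, 'k wr_elem) lie_alg) (wr_a ` {..<m} \<union> wr_t ` {..<n})" by (rule W_gen)
  fix L :: "('k, 'b) lie_alg" and a t
  assume H: "lie_algebra L \<and> wreath_relations L m n a t"
  interpret LR L m n a t using H by (unfold_locales) auto
  show "\<exists>f. lie_hom (wreath m n) L f \<and> (\<forall>k<m. f (wr_a k) = a k) \<and> (\<forall>i<n. f (wr_t i) = t i) \<and>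
              (\<forall>g. lie_hom (wreath m n) L g \<and> (\<forall>k<m. g (wr_a k) = a k) \<and> (\<forall>i<n. g (wr_t i) = t i)
                   \<longrightarrow> (\<forall>x\<in>car (wreath m n). g x = f x))"
  proof (rule exI[of _ ff], intro conjI)
    show "lie_hom (wreath m n) L ff" by (rule ff_hom)
    show "\<forall>k<m. ff (wr_a k) = a k" using ff_a by auto
    show "\<forall>i<n. ff (wr_t i) = t i" using ff_t by auto
    show "\<forall>g. lie_hom (wreath m n) L g \<and> (\<forall>k<m. g (wr_a k) = a k) \<and> (\<forall>i<n. g (wr_t i) = t i)
                   \<longrightarrow> (\<forall>x\<in>car (wreath m n). g x = ff x)"
    proof (intro allI impI ballI)
    fix g and x :: "'k wr_elem" assume G: "lie_hom (wreath m n) L g \<and> (\<forall>k<m. g (wr_a k) = a k) \<and> (\<forall>i<n. g (wr_t i) = t i)"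
      and x: "x \<in> car (wreath m n)"
    show "g x = ff x"
      using uniq[OF _ ff_hom _ _ _ x, of g] H G ff_a ff_t by auto
    qed
  qed
qed

end
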